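(* Let $F\neq\{0\}$ be a finite abelian group, and let $A$ and $A_1$ be skew braces on $F\times\mathbb{Z}/2\mathbb{Z}$ constructed from data $(\phi,y,z)$ and $(\phi_1,y_1,z_1)$ respectively, as described in the context. Then $A$ and $A_1$ are isomorphic if and only if there exists $\sigma\in\operatorname{Aut}(F)$ such that $\phi_1=\sigma\circ\phi\circ\sigma^{-1}$, $\sigma(y)=y_1$, and $z_1-\sigma(z)\in\phi_1(F)$.
   Context: Admissible data on a finite abelian group $F\ne\{0\}$: a triple $(\phi,y,z)$ with $\phi\in\operatorname{End}(F)$, $y,z\in F$, $2y=0$, $\phi(z)=\phi(y)-2z$, $\phi(\phi(f))=-2\phi(f)$ for all $f\in F$, and such that the map $\psi\colon F\times\mathbb{Z}/2\mathbb{Z}\times\mathbb{Z}/2\mathbb{Z}\to F$, $\psi(f,k_1,k_2)=[k_2](\phi(f)-[k_1]z)$, is surjective. Here for $k\in\mathbb{Z}/2\mathbb{Z}$, $[k]\in\{0,1\}$ is its representative. The skew brace built from $(\phi,y,z)$ is the set $F\times\mathbb{Z}/2\mathbb{Z}$ with $(f_1,k_1)+(f_2,k_2)=(f_1+(-1)^{k_1}f_2+[k_1][k_2]y,\,k_1+k_2)$ and $(f_1,k_1)\circ(f_2,k_2)=(f_1+(-1)^{k_1}f_2+\psi(f_1,k_1,k_2)+[k_1][k_2]y,\,k_1+k_2)$. (A skew brace is a triple $(A,+,\circ)$ of two group structures with $a\circ(b+c)=a\circ b-a+a\circ c$; an isomorphism of skew braces is a bijection that is a homomorphism for both operations.) 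*)

theory Defs
  imports Main
begin

text \<open>The finite abelian group F is the universe of a type of class
  finite + ab_group_add; Z/2Z is modelled by bool (True = 1, addition = xor),
  and for k in Z/2Z, [k] f is f if k = 1 and 0 if k = 0.\<close>

definition is_endo :: "('a::ab_group_add \<Rightarrow> 'a) \<Rightarrow> bool" where
  "is_endo \<phi> \<longleftrightarrow> (\<forall>a b. \<phi> (a + b) = \<phi> a + \<phi> b)"

definition is_aut :: "('a::ab_group_add \<Rightarrow> 'a) \<Rightarrow> bool" where
  "is_aut \<sigma> \<longleftrightarrow> is_endo \<sigma> \<and> bij \<sigma>"

definition zmul :: "bool \<Rightarrow> 'a::ab_group_add \<Rightarrow> 'a" where
  "zmul k x = (if k then x else 0)"

definition zsign :: "bool \<Rightarrow> 'a::ab_group_add \<Rightarrow> 'a" where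
  "zsign k x = (if k then - x else x)"

definition psi :: "('a::ab_group_add \<Rightarrow> 'a) \<Rightarrow> 'a \<Rightarrow> 'a \<Rightarrow> bool \<Rightarrow> bool \<Rightarrow> 'a" where
  "psi \<phi> z f k1 k2 = zmul k2 (\<phi> f - zmul k1 z)"

definition admissible :: "('a::ab_group_add \<Rightarrow> 'a) \<Rightarrow> 'a \<Rightarrow> 'a \<Rightarrow> bool" where
  "admissible \<phi> y z \<longleftrightarrow>
     is_endo \<phi> \<and> y + y = 0 \<and> \<phi> z = \<phi> y - (z + z) \<and>
     (\<forall>f. \<phi> (\<phi> f) = - (\<phi> f + \<phi> f)) \<and>
     (\<forall>w. \<exists>f k1 k2. psi \<phi> z f k1 k2 = w)"

definition sb_add :: "'a::ab_group_add \<Rightarrow> ('a \<times> bool) \<Rightarrow> ('a \<times> bool) \<Rightarrow> ('a \<times> bool)" where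
  "sb_add y a b = (case a of (f1, k1) \<Rightarrow> case b of (f2, k2) \<Rightarrow>
      (f1 + zsign k1 f2 + zmul (k1 \<and> k2) y, k1 \<noteq> k2))"

definition sb_circ :: "('a::ab_group_add \<Rightarrow> 'a) \<Rightarrow> 'a \<Rightarrow> 'a \<Rightarrow> ('a \<times> bool) \<Rightarrow> ('a \<times> bool) \<Rightarrow> ('a \<times> bool)" where
  "sb_circ \<phi> y z a b = (case a of (f1, k1) \<Rightarrow> case b of (f2, k2) \<Rightarrow>
      (f1 + zsign k1 f2 + psi \<phi> z f1 k1 k2 + zmul (k1 \<and> k2) y, k1 \<noteq> k2))"

definition skew_brace_iso :: "('a \<Rightarrow> 'a \<Rightarrow> 'a) \<Rightarrow> ('a \<Rightarrow> 'a \<Rightarrow> 'a) \<Rightarrow>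
    ('b \<Rightarrow> 'b \<Rightarrow> 'b) \<Rightarrow> ('b \<Rightarrow> 'b \<Rightarrow> 'b) \<Rightarrow> ('a \<Rightarrow> 'b) \<Rightarrow> bool" where
  "skew_brace_iso add1 circ1 add2 circ2 h \<longleftrightarrow> bij h \<and>
     (\<forall>a b. h (add1 a b) = add2 (h a) (h b)) \<and>
     (\<forall>a b. h (circ1 a b) = circ2 (h a) (h b))"

definition skew_braces_isomorphic :: "('a \<Rightarrow> 'a \<Rightarrow> 'a) \<Rightarrow> ('a \<Rightarrow> 'a \<Rightarrow> 'a) \<Rightarrow>
    ('b \<Rightarrow> 'b \<Rightarrow> 'b) \<Rightarrow> ('b \<Rightarrow> 'b \<Rightarrow> 'b) \<Rightarrow> bool" where
  "skew_braces_isomorphic add1 circ1 add2 circ2 \<longleftrightarrow>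
     (\<exists>h. skew_brace_iso add1 circ1 add2 circ2 h)"

end

theory Submission
  imports Defs
begin

lemma endo0: "is_endo f \<Longrightarrow> f 0 = 0"
  unfolding is_endo_def by (metis add_cancel_right_right)

lemma endo_neg: "is_endo f \<Longrightarrow> f (- a) = - f a"
  unfolding is_endo_def by (metis add.right_inverse add_eq_0_iff endo0 is_endo_def)

lemma endo_diff: "is_endo f \<Longrightarrow> f (a - b) = f a - f b"
  by (metis diff_conv_add_uminus endo_neg is_endo_def)

lemma endo_add: "is_endo f \<Longrightarrow> f (a + b) = f a + f b"
  unfolding is_endo_def by blast

lemma circ_decomp:
  "sb_circ \<phi> y z (f1,k1) (f2,k2) = sb_add y (psi \<phi> z f1 k1 k2, False) (sb_add y (f1,k1) (f2,k2))"
  unfolding sb_circ_def sb_add_def zmul_def zsign_def by (auto simp: algebra_simps)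

lemma add_cancel_r:
  "sb_add y (g,k) c = sb_add y (g',k') c \<Longrightarrow> g = g' \<and> k = k'"
  unfolding sb_add_def zmul_def zsign_def by (cases c) (auto split: if_splits)

lemma forward:
  fixes \<phi> \<phi>1 :: "'a::{finite, ab_group_add} \<Rightarrow> 'a" and y z y1 z1 :: 'a
  assumes A: "admissible \<phi> y z"
    and A1: "admissible \<phi>1 y1 z1"
    and H: "skew_brace_iso (sb_add y) (sb_circ \<phi> y z) (sb_add y1) (sb_circ \<phi>1 y1 z1) h"
  shows "\<exists>\<sigma>. is_aut \<sigma> \<and> \<phi>1 = \<sigma> \<circ> \<phi> \<circ> inv \<sigma> \<and> \<sigma> y = y1 \<and> z1 - \<sigma> z \<in> range \<phi>1"
proof -
  have bh: "bij h" and ha: "\<And>a b. h (sb_add y a b) = sb_add y1 (h a) (h b)"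
    and hc: "\<And>a b. h (sb_circ \<phi> y z a b) = sb_circ \<phi>1 y1 z1 (h a) (h b)"
    using H unfolding skew_brace_iso_def by auto
  have e1: "is_endo \<phi>1" using A1 unfolding admissible_def by blast
  have e: "is_endo \<phi>" using A unfolding admissible_def by blast
  have surjpsi: "\<And>w. \<exists>f k1 k2. psi \<phi> z f k1 k2 = w" using A unfolding admissible_def by blast
  have sndF: "snd (h (g, False)) = False" for g
  proof -
    obtain f k1 k2 where g: "psi \<phi> z f k1 k2 = g" using surjpsi by blast
    obtain q where q: "h (f,k1) = q" by auto
    obtain r where r: "h (0,k2) = r" by auto
    have "h (g,False) = (fst (h (g,False)), snd (h (g,False)))" by simp
    have "sb_add y1 (h (g,False)) (h (sb_add y (f,k1) (0,k2)))
        = h (sb_circ \<phi> y z (f,k1) (0,k2))"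
      by (simp add: circ_decomp g ha)
    also have "\<dots> = sb_circ \<phi>1 y1 z1 (fst q, snd q) (fst r, snd r)" using hc q r by simp
    also have "\<dots> = sb_add y1 (psi \<phi>1 z1 (fst q) (snd q) (snd r), False) (h (sb_add y (f,k1) (0,k2)))"
      unfolding circ_decomp ha q r by simp
    finally have "sb_add y1 (fst (h (g,False)), snd (h (g,False))) (h (sb_add y (f,k1) (0,k2)))
       = sb_add y1 (psi \<phi>1 z1 (fst q) (snd q) (snd r), False) (h (sb_add y (f,k1) (0,k2)))"
      by (simp only: prod.collapse)
    from add_cancel_r[OF this] show ?thesis by blast
  qed
  have sub: "h ` (UNIV \<times> {False}) \<subseteq> UNIV \<times> {False}"
  proof
    fix p assume "p \<in> h ` (UNIV \<times> {False})"
    then obtain g where g: "p = h (g,False)" by auto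
    show "p \<in> UNIV \<times> {False}" using sndF[of g] g by (simp add: mem_Times_iff)
  qed
  have injh: "inj h" using bh bij_is_inj by auto
  have eqim: "h ` (UNIV \<times> {False}) = UNIV \<times> {False}"
  proof (rule card_subset_eq[OF _ sub])
    show "finite (UNIV \<times> {False} :: ('a \<times> bool) set)" by simp
    show "card (h ` (UNIV \<times> {False})) = card (UNIV \<times> {False} :: ('a \<times> bool) set)"
      by (rule card_image[OF inj_on_subset[OF injh subset_UNIV]])
  qed
  have sndT: "snd (h (g, True)) = True" for g
  proof (rule ccontr)
    assume "snd (h (g, True)) \<noteq> True"
    then have "h (g,True) \<in> UNIV \<times> {False}" by (simp add: mem_Times_iff)
    then have "h (g,True) \<in> h ` (UNIV \<times> {False})" by (simp only: eqim)
    then obtain p where p: "p \<in> UNIV \<times> {False}" "h (g,True) = h p" by (rule imageE)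
    have "(g,True) = p" using injD[OF injh p(2)] .
    then have "snd p = True" by (metis snd_conv)
    then show False using p(1) by (simp add: mem_Times_iff)
  qed
  define \<sigma> where "\<sigma> f = fst (h (f,False))" for f
  define t where "t = fst (h (0,True))"
  have hF: "h (f,False) = (\<sigma> f, False)" for f using sndF[of f] unfolding \<sigma>_def
    by (metis prod.collapse)
  have h0T: "h (0,True) = (t, True)" using sndT[of 0] unfolding t_def by (metis prod.collapse)
  have hT: "h (f,True) = (\<sigma> f + t, True)" for f
  proof -
    have "h (f,True) = h (sb_add y (f,False) (0,True))"
      by (simp add: sb_add_def zsign_def zmul_def)
    also have "\<dots> = (\<sigma> f + t, True)" using ha[of "(f,False)" "(0,True)"] hF h0T by (simp add: sb_add_def zsign_def zmul_def)
    finally show ?thesis .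
  qed
  have se: "is_endo \<sigma>"
    unfolding is_endo_def
  proof (intro allI)
    fix a b
    have "(\<sigma> (a+b), False) = h (sb_add y (a,False) (b,False))"
      by (simp add: hF sb_add_def zsign_def zmul_def)
    also have "\<dots> = (\<sigma> a + \<sigma> b, False)" using ha[of "(a,False)" "(b,False)"] hF by (simp add: sb_add_def zsign_def zmul_def)
    finally show "\<sigma> (a+b) = \<sigma> a + \<sigma> b" by simp
  qed
  have si: "inj \<sigma>"
    by (rule injI) (metis hF injh injD prod.inject)
  have sb: "bij \<sigma>" using si finite_UNIV_inj_surj[OF finite_UNIV si] by (simp add: bij_def)
  have comm: "\<phi>1 (\<sigma> f) = \<sigma> (\<phi> f)" for f
  proof -
    have "h (sb_circ \<phi> y z (f,False) (0,True)) = sb_circ \<phi>1 y1 z1 (\<sigma> f, False) (t,True)"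
      using hc hF h0T by simp
    then show ?thesis
      by (simp add: hT sb_circ_def psi_def zsign_def zmul_def endo0[OF e] endo_add[OF se] algebra_simps)
  qed
  have phieq: "\<phi>1 = \<sigma> \<circ> \<phi> \<circ> inv \<sigma>"
  proof
    fix x
    obtain f where "x = \<sigma> f" using sb by (metis bij_pointE)
    then show "\<phi>1 x = (\<sigma> \<circ> \<phi> \<circ> inv \<sigma>) x" using comm si by simp
  qed
  have yeq: "\<sigma> y = y1"
  proof -
    have "h (sb_add y (0,True) (0,True)) = sb_add y1 (t,True) (t,True)" using ha h0T by simp
    then show ?thesis by (simp add: hF sb_add_def zsign_def zmul_def)
  qed
  have zeq: "z1 - \<sigma> z = \<phi>1 t"
  proof -
    have "h (sb_circ \<phi> y z (0,True) (0,True)) = sb_circ \<phi>1 y1 z1 (t,True) (t,True)" using hc h0T by simp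
    then have "\<sigma> (\<phi> 0 - z + y) = \<phi>1 t - z1 + y1"
      by (simp add: hF sb_circ_def psi_def zsign_def zmul_def algebra_simps)
    then show ?thesis using yeq endo0[OF e] endo_add[OF se] endo_neg[OF se]
      by (simp add: algebra_simps) (metis add.commute add_diff_cancel_left' diff_add_eq)
  qed
  show ?thesis
    apply (rule exI[of _ \<sigma>])
    using se sb phieq yeq zeq unfolding is_aut_def by auto
qed

lemma backward:
  fixes \<phi> \<phi>1 :: "'a::{finite, ab_group_add} \<Rightarrow> 'a" and y z y1 z1 :: 'a
  assumes A: "admissible \<phi> y z"
    and A1: "admissible \<phi>1 y1 z1"
    and S: "is_aut \<sigma>" "\<phi>1 = \<sigma> \<circ> \<phi> \<circ> inv \<sigma>" "\<sigma> y = y1" "z1 - \<sigma> z = \<phi>1 c"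
  shows "skew_brace_iso (sb_add y) (sb_circ \<phi> y z) (sb_add y1) (sb_circ \<phi>1 y1 z1)
           (\<lambda>(f,k). (\<sigma> f + zmul k c, k))"
proof -
  have se: "is_endo \<sigma>" and sb: "bij \<sigma>" using S(1) unfolding is_aut_def by auto
  have e1: "is_endo \<phi>1" using A1 unfolding admissible_def by blast
  have e: "is_endo \<phi>" using A unfolding admissible_def by blast
  have si: "inj \<sigma>" using sb bij_is_inj by auto
  have comm: "\<phi>1 (\<sigma> f) = \<sigma> (\<phi> f)" for f using S(2) si by simp
  have z1: "z1 = \<phi>1 c + \<sigma> z" using S(4) by (simp add: algebra_simps)
  have bh: "bij (\<lambda>(f,k). (\<sigma> f + zmul k c, k))"
  proof (rule bijI)
    show "inj (\<lambda>(f,k). (\<sigma> f + zmul k c, k))"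
    proof (rule injI)
      fix a b :: "'a \<times> bool"
      assume eq: "(\<lambda>(f,k). (\<sigma> f + zmul k c, k)) a = (\<lambda>(f,k). (\<sigma> f + zmul k c, k)) b"
      obtain f1 k1 f2 k2 where ab: "a = (f1,k1)" "b = (f2,k2)" by (cases a, cases b) auto
      have "k1 = k2" "\<sigma> f1 = \<sigma> f2" using eq unfolding ab by auto
      then show "a = b" using ab injD[OF si] by auto
    qed
    show "surj (\<lambda>(f,k). (\<sigma> f + zmul k c, k))"
    proof -
      have "(g,k) = (\<lambda>(f,k). (\<sigma> f + zmul k c, k)) (inv \<sigma> (g - zmul k c), k)" for g k
        by (simp add: surj_f_inv_f[OF bij_is_surj[OF sb]])
      note X = this
      show ?thesis unfolding surj_def
      proof
        fix p :: "'a \<times> bool"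
        obtain g k where "p = (g,k)" by (cases p)
        then show "\<exists>x. p = (\<lambda>(f,k). (\<sigma> f + zmul k c, k)) x" using X by blast
      qed
    qed
  qed
  note sl = endo_add[OF se] endo_neg[OF se] endo_diff[OF se] endo0[OF se] endo_add[OF e1] comm
  show ?thesis
    unfolding skew_brace_iso_def
  proof (intro conjI allI bh)
    fix a b :: "'a \<times> bool"
    obtain f1 k1 f2 k2 where ab: "a = (f1,k1)" "b = (f2,k2)" by (cases a, cases b) auto
    show "(\<lambda>(f,k). (\<sigma> f + zmul k c, k)) (sb_add y a b) =
          sb_add y1 ((\<lambda>(f,k). (\<sigma> f + zmul k c, k)) a) ((\<lambda>(f,k). (\<sigma> f + zmul k c, k)) b)"
      unfolding ab by (cases k1; cases k2) (simp_all add: sb_add_def zsign_def zmul_def sl S(3) algebra_simps)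
    show "(\<lambda>(f,k). (\<sigma> f + zmul k c, k)) (sb_circ \<phi> y z a b) =
          sb_circ \<phi>1 y1 z1 ((\<lambda>(f,k). (\<sigma> f + zmul k c, k)) a) ((\<lambda>(f,k). (\<sigma> f + zmul k c, k)) b)"
      unfolding ab by (cases k1; cases k2) (simp_all add: sb_circ_def psi_def zsign_def zmul_def sl S(3) z1 algebra_simps)
  qed
qed

theorem mainTheorem17:
  fixes \<phi> \<phi>1 :: "'a::{finite, ab_group_add} \<Rightarrow> 'a" and y z y1 z1 :: 'a
  assumes "(UNIV :: 'a set) \<noteq> {0}"
    and "admissible \<phi> y z"
    and "admissible \<phi>1 y1 z1"
  shows "skew_braces_isomorphic (sb_add y) (sb_circ \<phi> y z) (sb_add y1) (sb_circ \<phi>1 y1 z1)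
     \<longleftrightarrow> (\<exists>\<sigma>. is_aut \<sigma> \<and> \<phi>1 = \<sigma> \<circ> \<phi> \<circ> inv \<sigma> \<and> \<sigma> y = y1 \<and> z1 - \<sigma> z \<in> range \<phi>1)"
proof
  assume "skew_braces_isomorphic (sb_add y) (sb_circ \<phi> y z) (sb_add y1) (sb_circ \<phi>1 y1 z1)"
  then obtain h where "skew_brace_iso (sb_add y) (sb_circ \<phi> y z) (sb_add y1) (sb_circ \<phi>1 y1 z1) h"
    unfolding skew_braces_isomorphic_def by blast
  then show "\<exists>\<sigma>. is_aut \<sigma> \<and> \<phi>1 = \<sigma> \<circ> \<phi> \<circ> inv \<sigma> \<and> \<sigma> y = y1 \<and> z1 - \<sigma> z \<in> range \<phi>1"
    using forward assms(2,3) by blast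
next
  assume "\<exists>\<sigma>. is_aut \<sigma> \<and> \<phi>1 = \<sigma> \<circ> \<phi> \<circ> inv \<sigma> \<and> \<sigma> y = y1 \<and> z1 - \<sigma> z \<in> range \<phi>1"
  then obtain \<sigma> c where "is_aut \<sigma>" "\<phi>1 = \<sigma> \<circ> \<phi> \<circ> inv \<sigma>" "\<sigma> y = y1" "z1 - \<sigma> z = \<phi>1 c"
    by auto
  then show "skew_braces_isomorphic (sb_add y) (sb_circ \<phi> y z) (sb_add y1) (sb_circ \<phi>1 y1 z1)"
    unfolding skew_braces_isomorphic_def using backward assms(2,3) by blast
qed

end
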